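(* Let $d=1$ and $x,y\in\mathbb{R}$. If $1,x,y$ are linearly dependent over $\mathbb{Q}$ and $x$ or $y$ is irrational, then $(x,y)\notin\Pi$.
   Context: For $t\in\mathbb{R}$, $\|t\|$ is the distance from $t$ to $\mathbb{Z}$. Write $\mathbb{N}=\{1,2,\dots\}$. $\mathcal{D}$ is the set of all non-increasing $\psi:\mathbb{N}\to\mathbb{R}_{\ge0}$ with $\sum_n\psi(n)=\infty$. $W(\psi)$ is the set of $(x,y)\in\mathbb{R}^2$ with $\|nx+y\|<\psi(n)$ for infinitely many $n\in\mathbb{N}$, and $\Pi=\bigcap_{\psi\in\mathcal{D}}W(\psi)$. *)

theory Defs
  imports "HOL-Analysis.Analysis"
begin

definition dist_int :: "real \<Rightarrow> real" where
  "dist_int t = (INF k\<in>(\<int>::real set). \<bar>t - k\<bar>)"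

text \<open>Non-increasing psi : N -> R_{>=0} with divergent sum (N = {1,2,...}).\<close>
definition Dset :: "(nat \<Rightarrow> real) set" where
  "Dset = {\<psi>. (\<forall>n\<ge>1. \<psi> n \<ge> 0) \<and> (\<forall>m n. 1 \<le> m \<longrightarrow> m \<le> n \<longrightarrow> \<psi> n \<le> \<psi> m)
               \<and> \<not> summable (\<lambda>n. \<psi> (Suc n))}"

definition W :: "(nat \<Rightarrow> real) \<Rightarrow> (real \<times> real) set" where
  "W \<psi> = {(x, y). infinite {n::nat. n \<ge> 1 \<and> dist_int (real n * x + y) < \<psi> n}}"

definition Pi_set :: "(real \<times> real) set" where
  "Pi_set = (\<Inter>\<psi>\<in>Dset. W \<psi>)"

end

theory Submission
  imports Defs
begin

lemma dist_int_round: "dist_int t = \<bar>t - of_int (round t)\<bar>"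
  unfolding dist_int_def
proof (rule cInf_eq_minimum)
  show "\<bar>t - of_int (round t)\<bar> \<in> (\<lambda>k. \<bar>t - k\<bar>) ` \<int>" by (auto simp: Ints_def)
next
  fix z assume "z \<in> (\<lambda>k. \<bar>t - k\<bar>) ` (\<int>::real set)"
  then obtain k where k: "z = \<bar>t - of_int k\<bar>" by (auto elim: Ints_cases)
  have h: "\<bar>t - of_int (round t)\<bar> \<le> 1/2" using of_int_round_abs_le[of t] by (simp add: abs_minus_commute)
  show "\<bar>t - of_int (round t)\<bar> \<le> z"
  proof (rule ccontr)
    assume c: "\<not> \<bar>t - of_int (round t)\<bar> \<le> z"
    hence "\<bar>of_int k - of_int (round t)\<bar> < (1::real)" using h k by linarith
    hence "\<bar>k - round t\<bar> < 1" by linarith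
    hence "k = round t" by linarith
    thus False using c k by simp
  qed
qed

lemma dist_int_le: "dist_int t \<le> \<bar>t - of_int k\<bar>"
proof -
  have h: "\<bar>t - of_int (round t)\<bar> \<le> 1/2" using of_int_round_abs_le[of t] by (simp add: abs_minus_commute)
  show ?thesis
  proof (rule ccontr)
    assume c: "\<not> dist_int t \<le> \<bar>t - of_int k\<bar>"
    hence "\<bar>of_int k - of_int (round t)\<bar> < (1::real)" using h dist_int_round[of t] by linarith
    hence "\<bar>k - round t\<bar> < 1" by linarith
    hence "k = round t" by linarith
    thus False using c dist_int_round[of t] by simp
  qed
qed

lemma dist_int_nonneg: "dist_int t \<ge> 0" by (simp add: dist_int_round)

lemma dist_int_pos: "t \<notin> \<int> \<Longrightarrow> dist_int t > 0"
  by (auto simp: dist_int_round) (metis Ints_of_int)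

lemma dist_int_shift: "dist_int (t + of_int k) = dist_int t"
proof -
  have "dist_int (t + of_int k) \<le> dist_int t"
    using dist_int_le[of "t + of_int k" "round t + k"] by (simp add: dist_int_round)
  moreover have "dist_int t \<le> dist_int (t + of_int k)"
    using dist_int_le[of t "round (t + of_int k) - k"] by (simp add: dist_int_round)
  ultimately show ?thesis by simp
qed

lemma dist_int_mult: "dist_int (of_int q * t) \<le> \<bar>of_int q\<bar> * dist_int t"
proof -
  have "dist_int (of_int q * t) \<le> \<bar>of_int q * t - of_int (q * round t)\<bar>" by (rule dist_int_le)
  also have "\<dots> = \<bar>of_int q\<bar> * dist_int t" by (simp add: dist_int_round abs_mult[symmetric] algebra_simps)
  finally show ?thesis .
qed

lemma summable_mono_small:
  fixes g :: "nat \<Rightarrow> real"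
  assumes "summable g" "\<And>m n. m \<le> n \<Longrightarrow> g n \<le> g m" "\<And>n. g n \<ge> 0" "e > 0"
  shows "\<exists>N. \<forall>n\<ge>N. real n * g n < e"
proof -
  from assms(1) obtain N where N: "\<And>m n. m \<ge> N \<Longrightarrow> norm (sum g {m..<n}) < e/2"
    unfolding summable_Cauchy using \<open>e > 0\<close> by (meson half_gt_zero)
  show ?thesis
  proof (intro exI allI impI)
    fix n assume n: "n \<ge> 2 * N"
    let ?m = "n - n div 2"
    have "?m \<ge> N" using n by linarith
    have "real (card {?m..<Suc n}) * g n \<le> sum g {?m..<Suc n}"
      by (rule sum_bounded_below) (use assms(2) in auto)
    also have "\<dots> < e/2" using N[OF \<open>?m \<ge> N\<close>, of "Suc n"] by (simp add: sum_nonneg assms(3))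
    finally have a0: "real (card {?m..<Suc n}) * g n < e/2" .
    have "card {?m..<Suc n} = n div 2 + 1" by simp
    with a0 have a: "real (n div 2 + 1) * g n < e/2" by simp
    have "n \<le> 2 * (n div 2 + 1)" by presburger
    hence "real n \<le> 2 * real (n div 2 + 1)" by (metis of_nat_le_iff of_nat_mult of_nat_numeral)
    hence "real n * g n \<le> 2 * real (n div 2 + 1) * g n" using assms(3) by (simp add: mult_right_mono)
    thus "real n * g n < e" using a by linarith
  qed
qed

definition fm :: "real \<Rightarrow> nat \<Rightarrow> real" where
  "fm x k = Min ((\<lambda>j. dist_int (real j * x)) ` {1..max 1 k})"

lemma fm_le: "1 \<le> j \<Longrightarrow> j \<le> k \<Longrightarrow> fm x k \<le> dist_int (real j * x)"
  unfolding fm_def by (rule Min_le) auto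

lemma fm_attained: "\<exists>j. 1 \<le> j \<and> j \<le> max 1 k \<and> fm x k = dist_int (real j * x)"
proof -
  have "fm x k \<in> (\<lambda>j. dist_int (real j * x)) ` {1..max 1 k}"
    unfolding fm_def by (rule Min_in) auto
  thus ?thesis by auto
qed

lemma fm_ge: "(\<And>j. 1 \<le> j \<Longrightarrow> j \<le> max 1 k \<Longrightarrow> d \<le> dist_int (real j * x)) \<Longrightarrow> d \<le> fm x k"
  unfolding fm_def by (subst Min_ge_iff) auto

lemma fm_mono: "k \<le> k' \<Longrightarrow> fm x k' \<le> fm x k"
proof -
  assume "k \<le> k'"
  obtain j where "1 \<le> j" "j \<le> max 1 k" "fm x k = dist_int (real j * x)" using fm_attained by blast
  thus ?thesis using fm_le[of j "max 1 k'" x] \<open>k \<le> k'\<close> unfolding fm_def by auto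
qed

lemma mult_notin_Ints: "x \<notin> \<rat> \<Longrightarrow> j \<ge> 1 \<Longrightarrow> real j * x \<notin> \<int>"
proof
  assume "x \<notin> \<rat>" "j \<ge> 1" "real j * x \<in> \<int>"
  then have "real j * x \<in> \<rat>" using Ints_subset_Rats by blast
  hence "real j * x / real j \<in> \<rat>" by (rule Rats_divide) simp
  moreover have "real j * x / real j = x" using \<open>j \<ge> 1\<close> by simp
  ultimately show False using \<open>x \<notin> \<rat>\<close> by simp
qed

lemma fm_pos: "x \<notin> \<rat> \<Longrightarrow> fm x k > 0"
  using fm_attained[where x=x and k=k] dist_int_pos mult_notin_Ints by fastforce


lemma no_singular:
  assumes x: "x \<notin> \<rat>" and N0: "N0 \<ge> 1"
    and H: "\<And>m. m \<ge> N0 \<Longrightarrow> fm x m < 1 / (4 * real m)"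
  shows False
proof -
  define d where "d = fm x N0"
  have dpos: "d > 0" unfolding d_def using fm_pos[OF x] .
  obtain A where A: "1 \<le> A" "A \<le> N0" "dist_int (real A * x) = d"
    using fm_attained[where x=x and k=N0] N0 unfolding d_def by auto
  obtain m0 :: nat where m0: "1 / d < real m0" using reals_Archimedean2 by blast
  define m where "m = max N0 m0"
  have "fm x m < 1 / (4 * real m)" using H m_def by simp
  also have "\<dots> < d"
  proof -
    have "1 < d * real m0" using m0 dpos by (simp add: field_simps)
    moreover have "real m0 \<le> real m" unfolding m_def by simp
    ultimately have "1 < d * real m" using dpos by (smt (verit) mult_left_mono)
    hence "1 < d * (4 * real m)" by linarith
    moreover have "real m > 0" using m_def N0 by simp
    ultimately show ?thesis by (simp add: field_simps)
  qed
  finally have fmd: "fm x m < d" .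
  obtain j where j: "1 \<le> j" "dist_int (real j * x) < d"
    using fm_attained[where x=x and k=m] fmd by auto
  define M where "M = (LEAST j. 1 \<le> j \<and> dist_int (real j * x) < d)"
  have M: "1 \<le> M" "dist_int (real M * x) < d"
    using LeastI_ex[of "\<lambda>j. 1 \<le> j \<and> dist_int (real j * x) < d"] j unfolding M_def by blast+
  have Mmin: "d \<le> dist_int (real i * x)" if "1 \<le> i" "i < M" for i
    using not_less_Least[of i "\<lambda>j. 1 \<le> j \<and> dist_int (real j * x) < d"] that unfolding M_def by force
  have MN0: "M > N0"
  proof (rule ccontr)
    assume "\<not> M > N0"
    hence "d \<le> dist_int (real M * x)" unfolding d_def using fm_le[of M N0 x] M by simp
    thus False using M by simp
  qed
  have "d \<le> fm x (M - 1)"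
  proof (rule fm_ge)
    fix i assume i: "1 \<le> i" "i \<le> max 1 (M - 1)"
    have "i < M" using i MN0 N0 by simp
    thus "d \<le> dist_int (real i * x)" using Mmin i by simp
  qed
  also have "\<dots> < 1 / (4 * real (M - 1))" using H[of "M - 1"] MN0 by linarith
  finally have dM: "d < 1 / (4 * (real M - 1))" using MN0 by (simp add: of_nat_diff)
  define p where "p = round (real A * x)"
  define r where "r = round (real M * x)"
  define eA where "eA = real A * x - of_int p"
  define eM where "eM = real M * x - of_int r"
  have eA: "\<bar>eA\<bar> = d" using A(3) unfolding eA_def p_def by (simp add: dist_int_round)
  have eM: "\<bar>eM\<bar> < d" using M(2) unfolding eM_def r_def by (simp add: dist_int_round)
  define z where "z = int A * r - int M * p"
  have zeq: "real_of_int z = real M * eA - real A * eM"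
    unfolding z_def eA_def eM_def by (simp add: algebra_simps)
  have AM: "real A < real M" using A MN0 by simp
  have "\<bar>real M * eA\<bar> = real M * d" using eA by (simp add: abs_mult)
  moreover have "\<bar>real A * eM\<bar> \<le> real A * d" using eM A by (simp add: abs_mult)
  moreover have "real A * d < real M * d" using AM dpos by simp
  ultimately have "\<bar>real_of_int z\<bar> < 2 * real M * d" unfolding zeq by linarith
  also have "\<dots> \<le> 1"
  proof -
    have M2: "real M \<ge> 2" using MN0 N0 by linarith
    have "2 * real M * d \<le> 2 * real M * (1 / (4 * (real M - 1)))" using dM M2 by (intro mult_left_mono) auto
    also have "\<dots> \<le> 1" using M2 by (simp add: field_simps)
    finally show ?thesis .
  qed
  finally have "z = 0" by linarith
  hence "real M * eA = real A * eM" using zeq by simp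
  hence "real M * d = \<bar>real A * eM\<bar>" using eA by (metis abs_mult abs_of_nat)
  also have "\<dots> \<le> real A * d" using eM A by (simp add: abs_mult)
  also have "\<dots> < real M * d" using AM dpos by simp
  finally show False by simp
qed


lemma key_div:
  assumes x: "x \<notin> \<rat>" and C: "C \<ge> 1"
  shows "\<not> summable (\<lambda>n. fm x (C * Suc n))"
proof
  assume S: "summable (\<lambda>n. fm x (C * Suc n))"
  define g where "g n = fm x (C * n)" for n
  have "summable g" using S unfolding g_def by (subst summable_Suc_iff[symmetric]) simp
  moreover have "\<And>m n. m \<le> n \<Longrightarrow> g n \<le> g m" unfolding g_def by (intro fm_mono) simp
  moreover have "\<And>n. g n \<ge> 0" unfolding g_def using fm_pos[OF x] less_imp_le by blast
  moreover have "1 / (8 * real C) > 0" using C by simp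
  ultimately obtain N where N: "\<And>n. n \<ge> N \<Longrightarrow> real n * g n < 1 / (8 * real C)"
    using summable_mono_small by metis
  define N0 where "N0 = C * N + 2 * C"
  have "N0 \<ge> 1" using C N0_def by simp
  moreover have "fm x m < 1 / (4 * real m)" if m: "m \<ge> N0" for m
  proof -
    define n where "n = m div C"
    have "C * N \<le> m" using m N0_def by simp
    hence nN: "n \<ge> N" unfolding n_def using C by (simp add: less_eq_div_iff_mult_less_eq mult.commute)
    have "2 * C \<le> m" using m N0_def by simp
    hence n1: "n \<ge> 1" unfolding n_def using C by (simp add: less_eq_div_iff_mult_less_eq)
    have Cn: "C * n \<le> m" unfolding n_def by (simp add: mult.commute)
    have "m mod C < C" using C by simp
    moreover have "m = C * n + m mod C" unfolding n_def by simp
    ultimately have mC: "m < C * n + C" by linarith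
    have m2: "real m \<le> 2 * real C * real n"
    proof -
      have "C \<le> C * n" using n1 by simp
      hence "m \<le> 2 * C * n" using mC by linarith
      thus ?thesis by (metis of_nat_le_iff of_nat_mult of_nat_numeral)
    qed
    have "fm x m \<le> g n" unfolding g_def by (rule fm_mono[OF Cn])
    also have "g n < 1 / (8 * real C) / real n"
    proof -
      have "real n > 0" using n1 by simp
      thus ?thesis using N[OF nN] by (metis pos_less_divide_eq mult.commute)
    qed
    also have "\<dots> \<le> 1 / (4 * real m)"
    proof -
      have "real m > 0" using m N0_def C by simp
      thus ?thesis using m2 n1 C by (simp add: field_simps)
    qed
    finally show ?thesis .
  qed
  ultimately show False using no_singular[OF x] by blast
qed


lemma notin_PiI: "\<psi> \<in> Dset \<Longrightarrow> finite {n::nat. n \<ge> 1 \<and> dist_int (real n * x + y) < \<psi> n} \<Longrightarrow> (x, y) \<notin> Pi_set"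
  unfolding Pi_set_def W_def by auto

lemma int_mult_notin: "y \<notin> \<rat> \<Longrightarrow> Q > 0 \<Longrightarrow> of_int Q * y \<notin> \<int>"
proof
  assume "y \<notin> \<rat>" "Q > 0" "of_int Q * y \<in> \<int>"
  then have "of_int Q * y \<in> \<rat>" using Ints_subset_Rats by blast
  hence "of_int Q * y / of_int Q \<in> \<rat>" by (rule Rats_divide) simp
  moreover have "of_int Q * y / of_int Q = y" using \<open>Q > 0\<close> by simp
  ultimately show False using \<open>y \<notin> \<rat>\<close> by simp
qed

theorem lemma25:
  fixes x y :: real
  assumes "\<exists>a b c :: rat. (a, b, c) \<noteq> (0, 0, 0) \<and>
             of_rat a + of_rat b * x + of_rat c * y = 0"
    and "x \<notin> \<rat> \<or> y \<notin> \<rat>"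
  shows "(x, y) \<notin> Pi_set"
proof -
  obtain a b c :: rat where abc: "(a, b, c) \<noteq> (0, 0, 0)" "of_rat a + of_rat b * x + of_rat c * y = 0"
    using assms(1) by blast
  show ?thesis
  proof (cases "c = 0")
    case True
    have "b \<noteq> 0" using abc True by auto
    hence "x = - of_rat a / of_rat b" using abc True by (simp add: field_simps)
    hence xQ: "x \<in> \<rat>" by simp
    hence yQ: "y \<notin> \<rat>" using assms(2) by blast
    obtain P Q where PQ: "Q > 0" "x = of_int P / of_int Q" using Rats_cases'[OF xQ] by metis
    define d where "d = dist_int (of_int Q * y) / of_int Q"
    have dpos: "d > 0" unfolding d_def using dist_int_pos[OF int_mult_notin[OF yQ PQ(1)]] PQ(1) by simp
    have "(\<lambda>n::nat. d) \<in> Dset"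
      unfolding Dset_def
    proof (safe)
      assume "summable (\<lambda>n::nat. d)"
      hence "(\<lambda>n::nat. d) \<longlonglongrightarrow> 0" by (rule summable_LIMSEQ_zero)
      hence "d = 0" using LIMSEQ_const_iff by blast
      thus False using dpos by simp
    qed (use dpos in auto)
    moreover have "{n::nat. n \<ge> 1 \<and> dist_int (real n * x + y) < d} = {}"
    proof -
      have "d \<le> dist_int (real n * x + y)" for n :: nat
      proof -
        have "of_int Q * (real n * x + y) = of_int Q * y + of_int (int n * P)"
          using PQ by (simp add: field_simps)
        hence "dist_int (of_int Q * y) \<le> of_int Q * dist_int (real n * x + y)"
          using dist_int_mult[of Q "real n * x + y"] dist_int_shift[of "of_int Q * y" "int n * P"] PQ(1)
          by simp
        thus ?thesis unfolding d_def using PQ(1) by (simp add: field_simps)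
      qed
      thus ?thesis by (auto simp: not_less)
    qed
    ultimately show ?thesis by (intro notin_PiI) (auto simp del: Collect_empty_eq)
  next
    case False
    have yeq: "y = of_rat (- a / c) + of_rat (- b / c) * x" using abc False
      by (simp add: field_simps of_rat_divide of_rat_minus)
    have xQ: "x \<notin> \<rat>"
    proof
      assume "x \<in> \<rat>"
      hence "y \<in> \<rat>" using yeq by simp
      thus False using \<open>x \<in> \<rat>\<close> assms(2) by blast
    qed
    obtain P1 Q1 where PQ1: "Q1 > 0" "(of_rat (- a / c) :: real) = of_int P1 / of_int Q1"
      using Rats_cases'[OF Rats_of_rat[of "- a / c"]] by metis
    obtain S1 Q2 where PQ2: "Q2 > 0" "(of_rat (- b / c) :: real) = of_int S1 / of_int Q2"
      using Rats_cases'[OF Rats_of_rat[of "- b / c"]] by metis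
    define Q where "Q = Q1 * Q2"
    define P where "P = P1 * Q2"
    define S where "S = S1 * Q1"
    have Qpos: "Q > 0" unfolding Q_def using PQ1 PQ2 by simp
    have Qy: "of_int Q * y = of_int P + of_int S * x"
      unfolding Q_def P_def S_def yeq PQ1(2) PQ2(2) using PQ1(1) PQ2(1) by (simp add: field_simps)
    define C where "C = nat Q + nat \<bar>S\<bar>"
    have C1: "C \<ge> 1" unfolding C_def using Qpos by simp
    define \<psi> where "\<psi> n = fm x (C * n) / of_int Q" for n
    have "\<psi> \<in> Dset"
      unfolding Dset_def
    proof (safe)
      fix n :: nat show "0 \<le> \<psi> n" unfolding \<psi>_def using fm_pos[OF xQ, of "C * n"] Qpos by simp
    next
      fix m n :: nat assume "m \<le> n"
      thus "\<psi> n \<le> \<psi> m" unfolding \<psi>_def using Qpos by (intro divide_right_mono fm_mono) auto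
    next
      assume "summable (\<lambda>n. \<psi> (Suc n))"
      hence "summable (\<lambda>n. \<psi> (Suc n) * of_int Q)" by (rule summable_mult2)
      moreover have "(\<lambda>n. \<psi> (Suc n) * of_int Q) = (\<lambda>n. fm x (C * Suc n))"
        unfolding \<psi>_def using Qpos by auto
      ultimately show False using key_div[OF xQ C1] by simp
    qed
    moreover have "{n::nat. n \<ge> 1 \<and> dist_int (real n * x + y) < \<psi> n} \<subseteq> {..nat \<bar>S\<bar>}"
    proof (rule subsetI, rule ccontr)
      fix n assume n: "n \<in> {n::nat. n \<ge> 1 \<and> dist_int (real n * x + y) < \<psi> n}" "n \<notin> {..nat \<bar>S\<bar>}"
      hence n1: "n \<ge> 1" and nS: "int n > \<bar>S\<bar>" and lt: "dist_int (real n * x + y) < \<psi> n" by auto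
      define k where "k = nat (Q * int n + S)"
      have "Q * int n \<ge> int n" using Qpos n1 by simp
      hence kpos: "Q * int n + S > 0" using nS by linarith
      hence kreal: "real k = of_int Q * real n + of_int S" unfolding k_def by simp
      have k1: "k \<ge> 1" using kpos unfolding k_def by simp
      have kC: "k \<le> C * n"
      proof -
        have "\<bar>S\<bar> \<le> \<bar>S\<bar> * int n" using n1 by (simp add: mult_le_cancel_left1)
        hence "Q * int n + S \<le> int C * int n" unfolding C_def using Qpos by (simp add: algebra_simps)
        thus ?thesis unfolding k_def by (metis nat_le_iff of_nat_mult)
      qed
      have "of_int Q * (real n * x + y) = real k * x + of_int P"
        using Qy kreal by (simp add: algebra_simps)
      hence "dist_int (real k * x) \<le> of_int Q * dist_int (real n * x + y)"
        using dist_int_mult[of Q "real n * x + y"] dist_int_shift[of "real k * x" P] Qpos by simp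
      moreover have "fm x (C * n) \<le> dist_int (real k * x)"
        using fm_mono[OF kC, of x] fm_le[OF k1 order_refl, of x] by linarith
      ultimately have "\<psi> n \<le> dist_int (real n * x + y)"
        unfolding \<psi>_def using Qpos by (simp add: field_simps)
      thus False using lt by simp
    qed
    hence "finite {n::nat. n \<ge> 1 \<and> dist_int (real n * x + y) < \<psi> n}" by (rule finite_subset) simp
    ultimately show ?thesis by (rule notin_PiI)
  qed
qed

end
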